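(* Let $R$ be a reflexive relation on $U$. Then $\mathrm{DM(RS)}$ is spatial if and only if both $\wp(U)^{\blacktriangle}$ and $\wp(U)^{\vartriangle}$ are spatial.
   Context: Let $U$ be a set and $R\subseteq U\times U$ a binary relation. For $x\in U$, $R(x)=\{y\in U\mid (x,y)\in R\}$ and $\breve R(x)=\{y\in U\mid (y,x)\in R\}$. For $X\subseteq U$: $X^{\blacktriangledown}=\{x\in U\mid R(x)\subseteq X\}$, $X^{\blacktriangle}=\{x\in U\mid R(x)\cap X\neq\emptyset\}$, $X^{\triangledown}=\{x\in U\mid \breve R(x)\subseteq X\}$, $X^{\vartriangle}=\{x\in U\mid \breve R(x)\cap X\neq\emptyset\}$; composites like $X^{\vartriangle\blacktriangledown}$ mean $(X^{\vartriangle})^{\blacktriangledown}$. $\wp(U)^{\blacktriangledown}=\{X^{\blacktriangledown}\mid X\subseteq U\}$ and similarly $\wp(U)^{\blacktriangle},\wp(U)^{\vartriangle}$; complete lattices under $\subseteq$ (joins in $\wp(U)^{\blacktriangle},\wp(U)^{\vartriangle}$ are unions). $\mathcal S=\{x\in U\mid |R(x)|=1\}$. $\mathrm{RS}=\{(X^{\blacktriangledown},X^{\blacktriangle})\mid X\subseteq U\}$ ordered coordinatewise; $\mathrm{DM(RS)}$ is its Dedekind–MacNeille completion, identified with $\{(A,B)\in\wp(U)^{\blacktriangledown}\times\wp(U)^{\blacktriangle}\mid A^{\vartriangle\blacktriangle}\subseteq B,\ A\cap\mathcal S=B\cap\mathcal S\}$ ordered coordinatewise, with meets $\bigwedge_i(X_i,Y_i)=(\bigcap_iX_i,(\bigcap_iY_i)^{\triangledown\blacktriangle})$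 and joins $\bigvee_i(X_i,Y_i)=((\bigcup_iX_i)^{\vartriangle\blacktriangledown},\bigcup_iY_i)$. An element $j$ of a complete lattice $L$ is completely join-irreducible if $j=\bigvee S$ implies $j\in S$ for every $S\subseteq L$; $L$ is spatial if every element is the join of the completely join-irreducible elements below it. *)

theory Defs
  imports Main
begin

definition succR :: "('a \<times> 'a) set \<Rightarrow> 'a \<Rightarrow> 'a set" where
  "succR R x = {y. (x, y) \<in> R}"

definition predR :: "('a \<times> 'a) set \<Rightarrow> 'a \<Rightarrow> 'a set" where
  "predR R x = {y. (y, x) \<in> R}"

definition lowR :: "'a set \<Rightarrow> ('a \<times> 'a) set \<Rightarrow> 'a set \<Rightarrow> 'a set" where
  "lowR U R X = {x \<in> U. succR R x \<subseteq> X}"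

definition uppR :: "'a set \<Rightarrow> ('a \<times> 'a) set \<Rightarrow> 'a set \<Rightarrow> 'a set" where
  "uppR U R X = {x \<in> U. succR R x \<inter> X \<noteq> {}}"

definition lowC :: "'a set \<Rightarrow> ('a \<times> 'a) set \<Rightarrow> 'a set \<Rightarrow> 'a set" where
  "lowC U R X = {x \<in> U. predR R x \<subseteq> X}"

definition uppC :: "'a set \<Rightarrow> ('a \<times> 'a) set \<Rightarrow> 'a set \<Rightarrow> 'a set" where
  "uppC U R X = {x \<in> U. predR R x \<inter> X \<noteq> {}}"

definition lowR_sets :: "'a set \<Rightarrow> ('a \<times> 'a) set \<Rightarrow> 'a set set" where
  "lowR_sets U R = {lowR U R X | X. X \<subseteq> U}"

definition uppR_sets :: "'a set \<Rightarrow> ('a \<times> 'a) set \<Rightarrow> 'a set set" where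
  "uppR_sets U R = {uppR U R X | X. X \<subseteq> U}"

definition uppC_sets :: "'a set \<Rightarrow> ('a \<times> 'a) set \<Rightarrow> 'a set set" where
  "uppC_sets U R = {uppC U R X | X. X \<subseteq> U}"

definition singR :: "'a set \<Rightarrow> ('a \<times> 'a) set \<Rightarrow> 'a set" where
  "singR U R = {x \<in> U. card (succR R x) = 1}"

(* DM(RS), via its identification with pairs (A,B) *)
definition DMRS :: "'a set \<Rightarrow> ('a \<times> 'a) set \<Rightarrow> ('a set \<times> 'a set) set" where
  "DMRS U R = {(A, B). A \<in> lowR_sets U R \<and> B \<in> uppR_sets U R \<and>
      uppR U R (uppC U R A) \<subseteq> B \<and> A \<inter> singR U R = B \<inter> singR U R}"

definition pair_le :: "'a set \<times> 'a set \<Rightarrow> 'a set \<times> 'a set \<Rightarrow> bool" where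
  "pair_le p q \<longleftrightarrow> fst p \<subseteq> fst q \<and> snd p \<subseteq> snd q"

definition is_lub_in :: "'b set \<Rightarrow> ('b \<Rightarrow> 'b \<Rightarrow> bool) \<Rightarrow> 'b set \<Rightarrow> 'b \<Rightarrow> bool" where
  "is_lub_in L le S x \<longleftrightarrow> x \<in> L \<and> (\<forall>s\<in>S. le s x) \<and>
      (\<forall>y\<in>L. (\<forall>s\<in>S. le s y) \<longrightarrow> le x y)"

definition completely_join_irreducible ::
    "'b set \<Rightarrow> ('b \<Rightarrow> 'b \<Rightarrow> bool) \<Rightarrow> 'b \<Rightarrow> bool" where
  "completely_join_irreducible L le j \<longleftrightarrow> j \<in> L \<and>
      (\<forall>S. S \<subseteq> L \<and> is_lub_in L le S j \<longrightarrow> j \<in> S)"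

definition spatial :: "'b set \<Rightarrow> ('b \<Rightarrow> 'b \<Rightarrow> bool) \<Rightarrow> bool" where
  "spatial L le \<longleftrightarrow> (\<forall>x\<in>L. is_lub_in L le
      {j. completely_join_irreducible L le j \<and> le j x} x)"

end

theory Submission
  imports Defs
begin


lemma lub_union:
  assumes cl: "\<And>S. S \<subseteq> F \<Longrightarrow> \<Union>S \<in> F" and "S \<subseteq> F"
  shows "is_lub_in F (\<subseteq>) S x \<longleftrightarrow> x = \<Union>S"
proof
  assume a: "is_lub_in F (\<subseteq>) S x"
  have u: "\<Union>S \<in> F" using cl[OF assms(2)] .
  have 1: "\<forall>s\<in>S. s \<subseteq> x" and 2: "\<forall>y\<in>F. (\<forall>s\<in>S. s \<subseteq> y) \<longrightarrow> x \<subseteq> y"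
    using a unfolding is_lub_in_def by auto
  have "x \<subseteq> \<Union>S" using 2 u by blast
  moreover have "\<Union>S \<subseteq> x" using 1 by blast
  ultimately show "x = \<Union>S" by (rule subset_antisym)
next
  assume "x = \<Union>S"
  thus "is_lub_in F (\<subseteq>) S x" using cl[OF assms(2)] unfolding is_lub_in_def by blast
qed

lemma cji_union:
  assumes cl: "\<And>S. S \<subseteq> F \<Longrightarrow> \<Union>S \<in> F"
  shows "completely_join_irreducible F (\<subseteq>) j \<longleftrightarrow>
     j \<in> F \<and> (\<exists>p\<in>j. \<forall>k\<in>F. p \<in> k \<longrightarrow> k \<subseteq> j \<longrightarrow> k = j)"
proof
  assume a: "completely_join_irreducible F (\<subseteq>) j"
  have jF: "j \<in> F" and a2: "\<And>S. S \<subseteq> F \<Longrightarrow> is_lub_in F (\<subseteq>) S j \<Longrightarrow> j \<in> S"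
    using a unfolding completely_join_irreducible_def by auto
  show "j \<in> F \<and> (\<exists>p\<in>j. \<forall>k\<in>F. p \<in> k \<longrightarrow> k \<subseteq> j \<longrightarrow> k = j)"
  proof (rule conjI[OF jF], rule ccontr)
    assume "\<not> (\<exists>p\<in>j. \<forall>k\<in>F. p \<in> k \<longrightarrow> k \<subseteq> j \<longrightarrow> k = j)"
    hence h: "\<And>p. p \<in> j \<Longrightarrow> \<exists>k\<in>F. p \<in> k \<and> k \<subseteq> j \<and> k \<noteq> j" by blast
    define S where "S = {k\<in>F. k \<subseteq> j \<and> k \<noteq> j}"
    have SF: "S \<subseteq> F" unfolding S_def by blast
    have "j \<subseteq> \<Union>S"
    proof
      fix p assume "p \<in> j"
      then obtain k where "k \<in> F" "p \<in> k" "k \<subseteq> j" "k \<noteq> j" using h by blast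
      thus "p \<in> \<Union>S" unfolding S_def by blast
    qed
    moreover have "\<Union>S \<subseteq> j" unfolding S_def by blast
    ultimately have "j = \<Union>S" by (rule subset_antisym)
    hence "is_lub_in F (\<subseteq>) S j" using lub_union[OF cl SF] by simp
    hence "j \<in> S" using a2[OF SF] by simp
    thus False unfolding S_def by simp
  qed
next
  assume a: "j \<in> F \<and> (\<exists>p\<in>j. \<forall>k\<in>F. p \<in> k \<longrightarrow> k \<subseteq> j \<longrightarrow> k = j)"
  then obtain p where p: "p \<in> j" "\<And>k. k \<in> F \<Longrightarrow> p \<in> k \<Longrightarrow> k \<subseteq> j \<Longrightarrow> k = j" by blast
  have jF: "j \<in> F" using a by simp
  have "j \<in> S" if SF: "S \<subseteq> F" and l: "is_lub_in F (\<subseteq>) S j" for S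
  proof -
    have jS: "j = \<Union>S" using lub_union[OF cl SF] l by simp
    then obtain k where k: "k \<in> S" "p \<in> k" using p(1) by blast
    have "k \<subseteq> j" using k jS by blast
    hence "k = j" using p(2)[of k] k SF by blast
    thus "j \<in> S" using k by simp
  qed
  thus "completely_join_irreducible F (\<subseteq>) j"
    unfolding completely_join_irreducible_def using jF by blast
qed

lemma spatial_union:
  assumes cl: "\<And>S. S \<subseteq> F \<Longrightarrow> \<Union>S \<in> F"
  shows "spatial F (\<subseteq>) \<longleftrightarrow> (\<forall>x\<in>F. \<forall>p\<in>x. \<exists>j. completely_join_irreducible F (\<subseteq>) j \<and> j \<subseteq> x \<and> p \<in> j)"
proof -
  define C where "C x = {j. completely_join_irreducible F (\<subseteq>) j \<and> j \<subseteq> x}" for x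
  have CF: "C x \<subseteq> F" for x
    unfolding C_def completely_join_irreducible_def by blast
  have e: "is_lub_in F (\<subseteq>) (C x) x \<longleftrightarrow> x = \<Union>(C x)" for x
    using lub_union[OF cl CF] .
  have f: "x = \<Union>(C x) \<longleftrightarrow> (\<forall>p\<in>x. \<exists>j. completely_join_irreducible F (\<subseteq>) j \<and> j \<subseteq> x \<and> p \<in> j)" for x
  proof
    assume a: "x = \<Union>(C x)"
    show "\<forall>p\<in>x. \<exists>j. completely_join_irreducible F (\<subseteq>) j \<and> j \<subseteq> x \<and> p \<in> j"
    proof
      fix p assume "p \<in> x"
      hence "p \<in> \<Union>(C x)" using a by simp
      then obtain j where "j \<in> C x" "p \<in> j" by blast
      thus "\<exists>j. completely_join_irreducible F (\<subseteq>) j \<and> j \<subseteq> x \<and> p \<in> j" unfolding C_def by blast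
    qed
  next
    assume h: "\<forall>p\<in>x. \<exists>j. completely_join_irreducible F (\<subseteq>) j \<and> j \<subseteq> x \<and> p \<in> j"
    show "x = \<Union>(C x)"
    proof (rule subset_antisym)
      show "x \<subseteq> \<Union>(C x)"
      proof
        fix p assume "p \<in> x"
        then obtain j where "completely_join_irreducible F (\<subseteq>) j" "j \<subseteq> x" "p \<in> j" using h by blast
        thus "p \<in> \<Union>(C x)" unfolding C_def by blast
      qed
      show "\<Union>(C x) \<subseteq> x" unfolding C_def by blast
    qed
  qed
  have "spatial F (\<subseteq>) \<longleftrightarrow> (\<forall>x\<in>F. is_lub_in F (\<subseteq>) (C x) x)"
    unfolding spatial_def C_def by simp
  also have "\<dots> \<longleftrightarrow> (\<forall>x\<in>F. \<forall>p\<in>x. \<exists>j. completely_join_irreducible F (\<subseteq>) j \<and> j \<subseteq> x \<and> p \<in> j)"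
    using e f by simp
  finally show ?thesis .
qed

lemma spatial_transfer:
  assumes ord: "\<And>x y. x \<in> L \<Longrightarrow> y \<in> L \<Longrightarrow> le x y \<longleftrightarrow> f x \<subseteq> f y"
    and anti: "\<And>x y. x \<in> L \<Longrightarrow> y \<in> L \<Longrightarrow> le x y \<Longrightarrow> le y x \<Longrightarrow> x = y"
  shows "spatial L le \<longleftrightarrow> spatial (f ` L) (\<subseteq>)"
proof -
  have inj: "inj_on f L"
  proof (rule inj_onI)
    fix x y assume xy: "x \<in> L" "y \<in> L" "f x = f y"
    hence "le x y" "le y x" using ord by auto
    thus "x = y" using anti xy by blast
  qed
  have ub: "(\<forall>s\<in>S. le s y) \<longleftrightarrow> (\<forall>s\<in>f`S. s \<subseteq> f y)" if "S \<subseteq> L" "y \<in> L" for S y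
  proof -
    have "\<forall>s\<in>S. le s y = (f s \<subseteq> f y)"
    proof
      fix s assume "s \<in> S" thus "le s y = (f s \<subseteq> f y)" using ord[of s y] that by blast
    qed
    thus ?thesis by simp
  qed
  have lub: "is_lub_in L le S x \<longleftrightarrow> is_lub_in (f`L) (\<subseteq>) (f`S) (f x)" if SL: "S \<subseteq> L" and xL: "x \<in> L" for S x
  proof -
    have "(\<forall>y\<in>L. (\<forall>s\<in>S. le s y) \<longrightarrow> le x y) \<longleftrightarrow> (\<forall>y\<in>L. (\<forall>s\<in>f`S. s \<subseteq> f y) \<longrightarrow> f x \<subseteq> f y)"
      using ub[OF SL] ord[OF xL] by simp
    also have "\<dots> \<longleftrightarrow> (\<forall>y'\<in>f`L. (\<forall>s\<in>f`S. s \<subseteq> y') \<longrightarrow> f x \<subseteq> y')" by simp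
    finally show ?thesis unfolding is_lub_in_def using ub[OF SL xL] xL by simp
  qed
  have cjiL: "\<And>j. completely_join_irreducible L le j \<Longrightarrow> j \<in> L"
    by (simp add: completely_join_irreducible_def)
  have cjiL2: "\<And>j. completely_join_irreducible (f`L) (\<subseteq>) j \<Longrightarrow> j \<in> f`L"
    by (simp add: completely_join_irreducible_def)
  have cji: "completely_join_irreducible L le j \<longleftrightarrow> completely_join_irreducible (f`L) (\<subseteq>) (f j)"
    if jL: "j \<in> L" for j
  proof
    assume c: "completely_join_irreducible L le j"
    have c2: "\<And>S. S \<subseteq> L \<Longrightarrow> is_lub_in L le S j \<Longrightarrow> j \<in> S"
      using c unfolding completely_join_irreducible_def by blast
    have "f j \<in> S'" if S': "S' \<subseteq> f`L" "is_lub_in (f`L) (\<subseteq>) S' (f j)" for S'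
    proof -
      define S where "S = {x\<in>L. f x \<in> S'}"
      have SL: "S \<subseteq> L" unfolding S_def by blast
      have "S' = f`S" using S' unfolding S_def by blast
      hence "is_lub_in L le S j" using lub[OF SL jL] S'(2) by simp
      hence "j \<in> S" using c2 SL by blast
      thus "f j \<in> S'" unfolding S_def by blast
    qed
    thus "completely_join_irreducible (f`L) (\<subseteq>) (f j)"
      unfolding completely_join_irreducible_def using jL by blast
  next
    assume c: "completely_join_irreducible (f`L) (\<subseteq>) (f j)"
    have c2: "\<And>S'. S' \<subseteq> f`L \<Longrightarrow> is_lub_in (f`L) (\<subseteq>) S' (f j) \<Longrightarrow> f j \<in> S'"
      using c unfolding completely_join_irreducible_def by blast
    have "j \<in> S" if S: "S \<subseteq> L" "is_lub_in L le S j" for S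
    proof -
      have "is_lub_in (f`L) (\<subseteq>) (f`S) (f j)" using lub[OF S(1) jL] S(2) by simp
      moreover have "f`S \<subseteq> f`L" using S(1) by (rule image_mono)
      ultimately have "f j \<in> f`S" using c2 by simp
      then obtain s where s: "s \<in> S" "f j = f s" by blast
      have "s \<in> L" using s(1) S(1) by blast
      hence "j = s" using inj_onD[OF inj s(2) jL] by simp
      thus "j \<in> S" using s(1) by simp
    qed
    thus "completely_join_irreducible L le j"
      unfolding completely_join_irreducible_def using jL by blast
  qed
  have set: "{j'. completely_join_irreducible (f`L) (\<subseteq>) j' \<and> j' \<subseteq> f x}
      = f ` {j. completely_join_irreducible L le j \<and> le j x}" if xL: "x \<in> L" for x
  proof (rule set_eqI, rule iffI)
    fix j' assume "j' \<in> {j'. completely_join_irreducible (f`L) (\<subseteq>) j' \<and> j' \<subseteq> f x}"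
    hence a: "completely_join_irreducible (f`L) (\<subseteq>) j'" "j' \<subseteq> f x" by auto
    then obtain j where jL: "j \<in> L" and jj: "j' = f j" using cjiL2 by blast
    have "completely_join_irreducible L le j" using cji[OF jL] a(1) jj by simp
    moreover have "le j x" using ord[OF jL xL] a(2) jj by simp
    ultimately show "j' \<in> f ` {j. completely_join_irreducible L le j \<and> le j x}" using jj by blast
  next
    fix j' assume "j' \<in> f ` {j. completely_join_irreducible L le j \<and> le j x}"
    then obtain j where jj: "j' = f j" and a: "completely_join_irreducible L le j" "le j x" by blast
    have jL: "j \<in> L" using cjiL a(1) .
    have "completely_join_irreducible (f`L) (\<subseteq>) (f j)" using cji[OF jL] a(1) by simp
    moreover have "f j \<subseteq> f x" using ord[OF jL xL] a(2) by simp
    ultimately show "j' \<in> {j'. completely_join_irreducible (f`L) (\<subseteq>) j' \<and> j' \<subseteq> f x}" using jj by blast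
  qed
  have e: "is_lub_in L le {j. completely_join_irreducible L le j \<and> le j x} x \<longleftrightarrow>
     is_lub_in (f`L) (\<subseteq>) {j'. completely_join_irreducible (f`L) (\<subseteq>) j' \<and> j' \<subseteq> f x} (f x)"
    if xL: "x \<in> L" for x
  proof -
    have sub: "{j. completely_join_irreducible L le j \<and> le j x} \<subseteq> L" using cjiL by blast
    show ?thesis unfolding set[OF xL] using lub[OF sub xL] .
  qed
  have "spatial L le \<longleftrightarrow> (\<forall>x\<in>L. is_lub_in (f`L) (\<subseteq>) {j'. completely_join_irreducible (f`L) (\<subseteq>) j' \<and> j' \<subseteq> f x} (f x))"
    unfolding spatial_def using e by simp
  also have "\<dots> \<longleftrightarrow> spatial (f ` L) (\<subseteq>)" unfolding spatial_def by simp
  finally show ?thesis .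
qed



definition DP :: "'a set \<Rightarrow> ('a \<times> 'a) set \<Rightarrow> ('a set \<times> 'a set) set" where
  "DP U R = {(E, B). E \<in> uppC_sets U R \<and> B \<in> uppR_sets U R \<and> uppR U R E \<subseteq> B \<and>
      E \<inter> singR U R = B \<inter> singR U R}"

definition tag :: "'a set \<times> 'a set \<Rightarrow> ('a \<times> bool) set" where
  "tag p = (\<lambda>z. (z, True)) ` fst p \<union> (\<lambda>z. (z, False)) ` snd p"

lemma tag_T[simp]: "(z, True) \<in> tag (E, B) \<longleftrightarrow> z \<in> E" by (auto simp: tag_def)
lemma tag_F[simp]: "(z, False) \<in> tag (E, B) \<longleftrightarrow> z \<in> B" by (auto simp: tag_def)
lemma tag_sub[simp]: "tag (E, B) \<subseteq> tag (E', B') \<longleftrightarrow> E \<subseteq> E' \<and> B \<subseteq> B'" by (auto simp: tag_def)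
lemma tag_eq[simp]: "tag (E, B) = tag (E', B') \<longleftrightarrow> E = E' \<and> B = B'"
  by (metis tag_sub subset_antisym order_refl)

locale rsr =
  fixes U :: "'a set" and R :: "('a \<times> 'a) set"
  assumes sub: "R \<subseteq> U \<times> U" and refl: "\<forall>x\<in>U. (x, x) \<in> R"
begin

lemma singD: assumes "x \<in> singR U R" shows "(x, y) \<in> R \<longleftrightarrow> y = x"
proof -
  have xU: "x \<in> U" and c: "card (succR R x) = 1" using assms by (auto simp: singR_def)
  obtain a where a: "succR R x = {a}" using c card_1_singletonE by blast
  have "x \<in> succR R x" using refl xU by (simp add: succR_def)
  hence "succR R x = {x}" using a by simp
  thus ?thesis by (auto simp: succR_def)
qed

lemma singU: "singR U R \<subseteq> U" by (auto simp: singR_def)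

lemma lowR_uppC_lowR: "lowR U R (uppC U R (lowR U R X)) = lowR U R X"
  using sub by (auto simp: lowR_def uppC_def succR_def predR_def; blast)

lemma uppC_lowR_uppC: "uppC U R (lowR U R (uppC U R X)) = uppC U R X"
  using sub by (auto simp: lowR_def uppC_def succR_def predR_def; blast)

lemma lowR_fix: "A \<in> lowR_sets U R \<Longrightarrow> lowR U R (uppC U R A) = A"
  by (auto simp: lowR_sets_def lowR_uppC_lowR)

lemma uppC_fix: "E \<in> uppC_sets U R \<Longrightarrow> uppC U R (lowR U R E) = E"
  by (auto simp: uppC_sets_def uppC_lowR_uppC)

lemma lowR_sub: "lowR U R X \<subseteq> U" by (auto simp: lowR_def)
lemma uppC_sub: "uppC U R X \<subseteq> U" by (auto simp: uppC_def)
lemma uppR_sub: "uppR U R X \<subseteq> U" by (auto simp: uppR_def)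
lemma uppC_sets_sub: "E \<in> uppC_sets U R \<Longrightarrow> E \<subseteq> U" by (auto simp: uppC_sets_def uppC_def)
lemma uppR_sets_sub: "E \<in> uppR_sets U R \<Longrightarrow> E \<subseteq> U" by (auto simp: uppR_sets_def uppR_def)
lemma lowR_sets_sub: "E \<in> lowR_sets U R \<Longrightarrow> E \<subseteq> U" by (auto simp: lowR_sets_def lowR_def)

lemma uppC_sing: assumes "A \<in> lowR_sets U R" shows "uppC U R A \<inter> singR U R = A \<inter> singR U R"
proof
  show "A \<inter> singR U R \<subseteq> uppC U R A \<inter> singR U R"
    using refl lowR_sets_sub[OF assms] by (auto simp: uppC_def predR_def)
next
  obtain X where X: "A = lowR U R X" using assms by (auto simp: lowR_sets_def)
  show "uppC U R A \<inter> singR U R \<subseteq> A \<inter> singR U R"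
  proof
    fix s assume s: "s \<in> uppC U R A \<inter> singR U R"
    then obtain a where a: "a \<in> A" "(a, s) \<in> R" by (auto simp: uppC_def predR_def)
    have "succR R s = {s}" using singD s by (auto simp: succR_def)
    moreover have "s \<in> X" using a X by (auto simp: lowR_def succR_def)
    ultimately show "s \<in> A \<inter> singR U R" using s X singU by (auto simp: lowR_def)
  qed
qed

lemma uppR_sing: assumes "E \<subseteq> U" shows "uppR U R E \<inter> singR U R = E \<inter> singR U R"
  using assms refl singD singU by (auto simp: uppR_def succR_def)

lemma uppC_sets_Union: assumes "Q \<subseteq> uppC_sets U R" shows "\<Union>Q \<in> uppC_sets U R"
proof -
  let ?Y = "\<Union>{X. X \<subseteq> U \<and> uppC U R X \<in> Q}"
  have "uppC U R ?Y = \<Union>Q"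
  proof
    show "uppC U R ?Y \<subseteq> \<Union>Q" by (auto simp: uppC_def)
    show "\<Union>Q \<subseteq> uppC U R ?Y"
    proof
      fix z assume "z \<in> \<Union>Q"
      then obtain q where "q \<in> Q" "z \<in> q" by blast
      then obtain X where "X \<subseteq> U" "q = uppC U R X" using assms by (auto simp: uppC_sets_def)
      thus "z \<in> uppC U R ?Y" using \<open>z \<in> q\<close> \<open>q \<in> Q\<close> by (auto simp: uppC_def)
    qed
  qed
  moreover have "?Y \<subseteq> U" by blast
  ultimately show ?thesis unfolding uppC_sets_def by blast
qed

lemma uppR_sets_Union: assumes "Q \<subseteq> uppR_sets U R" shows "\<Union>Q \<in> uppR_sets U R"
proof -
  let ?Y = "\<Union>{X. X \<subseteq> U \<and> uppR U R X \<in> Q}"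
  have "uppR U R ?Y = \<Union>Q"
  proof
    show "uppR U R ?Y \<subseteq> \<Union>Q" by (auto simp: uppR_def)
    show "\<Union>Q \<subseteq> uppR U R ?Y"
    proof
      fix z assume "z \<in> \<Union>Q"
      then obtain q where "q \<in> Q" "z \<in> q" by blast
      then obtain X where "X \<subseteq> U" "q = uppR U R X" using assms by (auto simp: uppR_sets_def)
      thus "z \<in> uppR U R ?Y" using \<open>z \<in> q\<close> \<open>q \<in> Q\<close> by (auto simp: uppR_def)
    qed
  qed
  moreover have "?Y \<subseteq> U" by blast
  ultimately show ?thesis unfolding uppR_sets_def by blast
qed

lemma uppR_mono: "X \<subseteq> Y \<Longrightarrow> uppR U R X \<subseteq> uppR U R Y" by (auto simp: uppR_def)

lemma uppR_in: "X \<subseteq> U \<Longrightarrow> uppR U R X \<in> uppR_sets U R" by (auto simp: uppR_sets_def)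

lemma S_in_uppC: assumes T: "T \<subseteq> singR U R" shows "T \<in> uppC_sets U R"
proof -
  have TU: "T \<subseteq> U" using T singU by blast
  have "uppC U R T = T"
  proof
    show "uppC U R T \<subseteq> T"
    proof
      fix x assume "x \<in> uppC U R T"
      then obtain t where t: "t \<in> T" "(t, x) \<in> R" by (auto simp: uppC_def predR_def)
      have "x = t" using singD[of t x] t T by blast
      thus "x \<in> T" using t by simp
    qed
    show "T \<subseteq> uppC U R T"
    proof
      fix t assume t: "t \<in> T"
      hence "t \<in> U" "(t, t) \<in> R" using TU refl by auto
      thus "t \<in> uppC U R T" using t by (auto simp: uppC_def predR_def)
    qed
  qed
  hence "\<exists>X. T = uppC U R X \<and> X \<subseteq> U" using TU by metis
  thus ?thesis unfolding uppC_sets_def by simp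
qed

lemma uppR_S_sub: assumes "K \<in> uppR_sets U R" shows "uppR U R (K \<inter> singR U R) \<subseteq> K"
proof
  obtain X where X: "K = uppR U R X" using assms by (auto simp: uppR_sets_def)
  fix x assume "x \<in> uppR U R (K \<inter> singR U R)"
  then obtain s where s: "(x, s) \<in> R" "s \<in> K" "s \<in> singR U R" by (auto simp: uppR_def succR_def)
  have "s \<in> X" using s X singD by (auto simp: uppR_def succR_def)
  thus "x \<in> K" using X s sub by (auto simp: uppR_def succR_def)
qed

lemma DP_K: assumes K: "K \<in> uppR_sets U R" shows "(K \<inter> singR U R, K) \<in> DP U R"
proof -
  have "K \<inter> singR U R \<in> uppC_sets U R" by (rule S_in_uppC) blast
  moreover have "uppR U R (K \<inter> singR U R) \<subseteq> K" by (rule uppR_S_sub[OF K])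
  moreover have "K \<inter> singR U R \<inter> singR U R = K \<inter> singR U R" by blast
  ultimately show ?thesis unfolding DP_def using K by simp
qed

lemma DP_E: assumes E: "E \<in> uppC_sets U R" shows "(E, uppR U R E) \<in> DP U R"
proof -
  have EU: "E \<subseteq> U" by (rule uppC_sets_sub[OF E])
  have "uppR U R E \<in> uppR_sets U R" by (rule uppR_in[OF EU])
  moreover have "E \<inter> singR U R = uppR U R E \<inter> singR U R" using uppR_sing[OF EU] by simp
  ultimately show ?thesis unfolding DP_def using E by simp
qed

lemma Fam_closed: assumes "S \<subseteq> tag ` DP U R" shows "\<Union>S \<in> tag ` DP U R"
proof -
  define P where "P = {p \<in> DP U R. tag p \<in> S}"
  have SP: "S = tag ` P" using assms P_def by auto
  define E where "E = \<Union>(fst ` P)"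
  define B where "B = \<Union>(snd ` P)"
  have "\<Union>S = tag (E, B)" unfolding SP E_def B_def tag_def by auto
  moreover have "(E, B) \<in> DP U R"
  proof -
    have "E \<in> uppC_sets U R" unfolding E_def by (rule uppC_sets_Union) (auto simp: P_def DP_def)
    moreover have "B \<in> uppR_sets U R" unfolding B_def by (rule uppR_sets_Union) (auto simp: P_def DP_def)
    moreover have "uppR U R E \<subseteq> B" 
    proof
      fix x assume "x \<in> uppR U R E"
      then obtain y p where "x \<in> U" "y \<in> succR R x" "p \<in> P" "y \<in> fst p" unfolding E_def uppR_def by blast
      moreover hence "uppR U R (fst p) \<subseteq> snd p" unfolding P_def DP_def by auto
      ultimately show "x \<in> B" unfolding B_def uppR_def by blast
    qed
    moreover have "E \<inter> singR U R = B \<inter> singR U R"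
    proof -
      have pe: "fst p \<inter> singR U R = snd p \<inter> singR U R" if "p \<in> P" for p
        using that unfolding P_def DP_def by auto
      show ?thesis
      proof
        show "E \<inter> singR U R \<subseteq> B \<inter> singR U R"
        proof
          fix x assume "x \<in> E \<inter> singR U R"
          then obtain p where "p \<in> P" "x \<in> fst p" "x \<in> singR U R" unfolding E_def by blast
          hence "x \<in> snd p \<inter> singR U R" using pe by blast
          thus "x \<in> B \<inter> singR U R" using \<open>p \<in> P\<close> unfolding B_def by blast
        qed
        show "B \<inter> singR U R \<subseteq> E \<inter> singR U R"
        proof
          fix x assume "x \<in> B \<inter> singR U R"
          then obtain p where "p \<in> P" "x \<in> snd p" "x \<in> singR U R" unfolding B_def by blast
          hence "x \<in> fst p \<inter> singR U R" using pe by blast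
          thus "x \<in> E \<inter> singR U R" using \<open>p \<in> P\<close> unfolding E_def by blast
        qed
      qed
    qed
    ultimately show ?thesis unfolding DP_def by auto
  qed
  ultimately show ?thesis by blast
qed

end


context rsr begin

lemma DP_img: "(\<lambda>p. (uppC U R (fst p), snd p)) ` DMRS U R = DP U R"
proof (rule set_eqI, rule iffI)
  fix q assume "q \<in> (\<lambda>p. (uppC U R (fst p), snd p)) ` DMRS U R"
  then obtain A B where AB: "(A, B) \<in> DMRS U R" "q = (uppC U R A, B)" by auto
  have A: "A \<in> lowR_sets U R" using AB by (auto simp: DMRS_def)
  have "uppC U R A \<in> uppC_sets U R" using lowR_sets_sub[OF A] by (auto simp: uppC_sets_def)
  thus "q \<in> DP U R" using AB uppC_sing[OF A] by (auto simp: DMRS_def DP_def)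
next
  fix q assume q: "q \<in> DP U R"
  then obtain E B where EB: "q = (E, B)" "E \<in> uppC_sets U R" "B \<in> uppR_sets U R"
     "uppR U R E \<subseteq> B" "E \<inter> singR U R = B \<inter> singR U R" by (auto simp: DP_def)
  let ?A = "lowR U R E"
  have A: "?A \<in> lowR_sets U R" using uppC_sets_sub[OF EB(2)] by (auto simp: lowR_sets_def)
  have fx: "uppC U R ?A = E" using uppC_fix[OF EB(2)] .
  have "(?A, B) \<in> DMRS U R" using EB fx uppC_sing[OF A] A by (auto simp: DMRS_def)
  thus "q \<in> (\<lambda>p. (uppC U R (fst p), snd p)) ` DMRS U R" using fx EB(1) by force
qed

lemma spatial_DMRS: "spatial (DMRS U R) pair_le \<longleftrightarrow> spatial (tag ` DP U R) (\<subseteq>)"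
proof -
  let ?f = "\<lambda>p. tag (uppC U R (fst p), snd p)"
  have img: "?f ` DMRS U R = tag ` DP U R"
  proof -
    have "?f ` DMRS U R = tag ` ((\<lambda>p. (uppC U R (fst p), snd p)) ` DMRS U R)" by (simp add: image_image)
    thus ?thesis using DP_img by simp
  qed
  have ord: "pair_le x y \<longleftrightarrow> ?f x \<subseteq> ?f y" if "x \<in> DMRS U R" "y \<in> DMRS U R" for x y
  proof -
    have A: "fst x \<in> lowR_sets U R" "fst y \<in> lowR_sets U R" using that by (auto simp: DMRS_def)
    have "fst x \<subseteq> fst y \<longleftrightarrow> uppC U R (fst x) \<subseteq> uppC U R (fst y)"
    proof
      assume "fst x \<subseteq> fst y" thus "uppC U R (fst x) \<subseteq> uppC U R (fst y)" by (auto simp: uppC_def)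
    next
      assume "uppC U R (fst x) \<subseteq> uppC U R (fst y)"
      hence "lowR U R (uppC U R (fst x)) \<subseteq> lowR U R (uppC U R (fst y))" by (auto simp: lowR_def)
      thus "fst x \<subseteq> fst y" using lowR_fix A by simp
    qed
    thus ?thesis by (simp add: pair_le_def tag_sub)
  qed
  have anti: "x = y" if "pair_le x y" "pair_le y x" for x y :: "'a set \<times> 'a set"
    using that by (auto simp: pair_le_def prod_eq_iff)
  have "spatial (DMRS U R) pair_le \<longleftrightarrow> spatial (?f ` DMRS U R) (\<subseteq>)"
    by (rule spatial_transfer) (use ord anti in auto)
  thus ?thesis using img by simp
qed

lemma cjiF: "completely_join_irreducible (tag ` DP U R) (\<subseteq>) j \<longleftrightarrow>
     j \<in> tag ` DP U R \<and> (\<exists>p\<in>j. \<forall>k\<in>tag ` DP U R. p \<in> k \<longrightarrow> k \<subseteq> j \<longrightarrow> k = j)"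
  by (rule cji_union) (rule Fam_closed)
lemma cjiR: "completely_join_irreducible (uppR_sets U R) (\<subseteq>) j \<longleftrightarrow>
     j \<in> uppR_sets U R \<and> (\<exists>p\<in>j. \<forall>k\<in>uppR_sets U R. p \<in> k \<longrightarrow> k \<subseteq> j \<longrightarrow> k = j)"
  by (rule cji_union) (rule uppR_sets_Union)
lemma cjiC: "completely_join_irreducible (uppC_sets U R) (\<subseteq>) j \<longleftrightarrow>
     j \<in> uppC_sets U R \<and> (\<exists>p\<in>j. \<forall>k\<in>uppC_sets U R. p \<in> k \<longrightarrow> k \<subseteq> j \<longrightarrow> k = j)"
  by (rule cji_union) (rule uppC_sets_Union)
lemma spF: "spatial (tag ` DP U R) (\<subseteq>) \<longleftrightarrow> (\<forall>x\<in>tag ` DP U R. \<forall>p\<in>x. \<exists>j. completely_join_irreducible (tag ` DP U R) (\<subseteq>) j \<and> j \<subseteq> x \<and> p \<in> j)"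
  by (rule spatial_union) (rule Fam_closed)
lemma spR: "spatial (uppR_sets U R) (\<subseteq>) \<longleftrightarrow> (\<forall>x\<in>uppR_sets U R. \<forall>p\<in>x. \<exists>j. completely_join_irreducible (uppR_sets U R) (\<subseteq>) j \<and> j \<subseteq> x \<and> p \<in> j)"
  by (rule spatial_union) (rule uppR_sets_Union)
lemma spC: "spatial (uppC_sets U R) (\<subseteq>) \<longleftrightarrow> (\<forall>x\<in>uppC_sets U R. \<forall>p\<in>x. \<exists>j. completely_join_irreducible (uppC_sets U R) (\<subseteq>) j \<and> j \<subseteq> x \<and> p \<in> j)"
  by (rule spatial_union) (rule uppC_sets_Union)

lemma cjiF_elim:
  assumes "completely_join_irreducible (tag ` DP U R) (\<subseteq>) j"
  obtains E B q b where "j = tag (E, B)" "(E, B) \<in> DP U R" "(q, b) \<in> j"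
    "\<And>k. k \<in> tag ` DP U R \<Longrightarrow> (q, b) \<in> k \<Longrightarrow> k \<subseteq> j \<Longrightarrow> k = j"
proof -
  have a: "j \<in> tag ` DP U R" "\<exists>p\<in>j. \<forall>k\<in>tag ` DP U R. p \<in> k \<longrightarrow> k \<subseteq> j \<longrightarrow> k = j"
    using assms unfolding cjiF by simp_all
  obtain E B where EB: "j = tag (E, B)" "(E, B) \<in> DP U R" using a(1) by auto
  obtain p where p: "p \<in> j" "\<forall>k\<in>tag ` DP U R. p \<in> k \<longrightarrow> k \<subseteq> j \<longrightarrow> k = j" using a(2) by blast
  obtain q b where qb: "p = (q, b)" by (cases p) simp
  have m1: "(q, b) \<in> j" using p(1) qb by simp
  have m0: "\<forall>k\<in>tag ` DP U R. (q, b) \<in> k \<longrightarrow> k \<subseteq> j \<longrightarrow> k = j" using p(2) unfolding qb .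
  have m2: "\<And>k. k \<in> tag ` DP U R \<Longrightarrow> (q, b) \<in> k \<Longrightarrow> k \<subseteq> j \<Longrightarrow> k = j"
    using m0 by blast
  show ?thesis by (rule that[OF EB m1 m2])
qed

lemma cjiR_elim:
  assumes "completely_join_irreducible (uppR_sets U R) (\<subseteq>) j"
  obtains q where "j \<in> uppR_sets U R" "q \<in> j"
    "\<And>k. k \<in> uppR_sets U R \<Longrightarrow> q \<in> k \<Longrightarrow> k \<subseteq> j \<Longrightarrow> k = j"
proof -
  have a: "j \<in> uppR_sets U R" "\<exists>p\<in>j. \<forall>k\<in>uppR_sets U R. p \<in> k \<longrightarrow> k \<subseteq> j \<longrightarrow> k = j"
    using assms unfolding cjiR by simp_all
  obtain q where "q \<in> j" "\<forall>k\<in>uppR_sets U R. q \<in> k \<longrightarrow> k \<subseteq> j \<longrightarrow> k = j" using a(2) by blast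
  thus ?thesis using that a(1) by blast
qed

lemma cjiC_elim:
  assumes "completely_join_irreducible (uppC_sets U R) (\<subseteq>) j"
  obtains q where "j \<in> uppC_sets U R" "q \<in> j"
    "\<And>k. k \<in> uppC_sets U R \<Longrightarrow> q \<in> k \<Longrightarrow> k \<subseteq> j \<Longrightarrow> k = j"
proof -
  have a: "j \<in> uppC_sets U R" "\<exists>p\<in>j. \<forall>k\<in>uppC_sets U R. p \<in> k \<longrightarrow> k \<subseteq> j \<longrightarrow> k = j"
    using assms unfolding cjiC by simp_all
  obtain q where "q \<in> j" "\<forall>k\<in>uppC_sets U R. q \<in> k \<longrightarrow> k \<subseteq> j \<longrightarrow> k = j" using a(2) by blast
  thus ?thesis using that a(1) by blast
qed

lemma cjiF_intro:
  assumes "j \<in> tag ` DP U R" "p \<in> j" "\<And>k. k \<in> tag ` DP U R \<Longrightarrow> p \<in> k \<Longrightarrow> k \<subseteq> j \<Longrightarrow> k = j"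
  shows "completely_join_irreducible (tag ` DP U R) (\<subseteq>) j"
proof -
  have "\<forall>k\<in>tag ` DP U R. p \<in> k \<longrightarrow> k \<subseteq> j \<longrightarrow> k = j" using assms(3) by blast
  hence "\<exists>p\<in>j. \<forall>k\<in>tag ` DP U R. p \<in> k \<longrightarrow> k \<subseteq> j \<longrightarrow> k = j" using assms(2) by blast
  thus ?thesis unfolding cjiF using assms(1) by simp
qed

lemma cjiR_intro:
  assumes "j \<in> uppR_sets U R" "p \<in> j" "\<And>k. k \<in> uppR_sets U R \<Longrightarrow> p \<in> k \<Longrightarrow> k \<subseteq> j \<Longrightarrow> k = j"
  shows "completely_join_irreducible (uppR_sets U R) (\<subseteq>) j"
proof -
  have "\<forall>k\<in>uppR_sets U R. p \<in> k \<longrightarrow> k \<subseteq> j \<longrightarrow> k = j" using assms(3) by blast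
  hence "\<exists>p\<in>j. \<forall>k\<in>uppR_sets U R. p \<in> k \<longrightarrow> k \<subseteq> j \<longrightarrow> k = j" using assms(2) by blast
  thus ?thesis unfolding cjiR using assms(1) by simp
qed

lemma cjiC_intro:
  assumes "j \<in> uppC_sets U R" "p \<in> j" "\<And>k. k \<in> uppC_sets U R \<Longrightarrow> p \<in> k \<Longrightarrow> k \<subseteq> j \<Longrightarrow> k = j"
  shows "completely_join_irreducible (uppC_sets U R) (\<subseteq>) j"
proof -
  have "\<forall>k\<in>uppC_sets U R. p \<in> k \<longrightarrow> k \<subseteq> j \<longrightarrow> k = j" using assms(3) by blast
  hence "\<exists>p\<in>j. \<forall>k\<in>uppC_sets U R. p \<in> k \<longrightarrow> k \<subseteq> j \<longrightarrow> k = j" using assms(2) by blast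
  thus ?thesis unfolding cjiC using assms(1) by simp
qed

lemma main_eq: "spatial (tag ` DP U R) (\<subseteq>) \<longleftrightarrow>
   (spatial (uppR_sets U R) (\<subseteq>) \<and> spatial (uppC_sets U R) (\<subseteq>))"
proof
  assume F: "spatial (tag ` DP U R) (\<subseteq>)"
  have F': "\<And>x p. x \<in> tag ` DP U R \<Longrightarrow> p \<in> x \<Longrightarrow> \<exists>j. completely_join_irreducible (tag ` DP U R) (\<subseteq>) j \<and> j \<subseteq> x \<and> p \<in> j"
    using F unfolding spF by blast
  have "\<forall>x\<in>uppR_sets U R. \<forall>p\<in>x. \<exists>j. completely_join_irreducible (uppR_sets U R) (\<subseteq>) j \<and> j \<subseteq> x \<and> p \<in> j"
  proof (intro ballI)
    fix x z assume x: "x \<in> uppR_sets U R" and z: "z \<in> x"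
    have T: "tag (x \<inter> singR U R, x) \<in> tag ` DP U R" using DP_K[OF x] by (rule imageI)
    have zT: "(z, False) \<in> tag (x \<inter> singR U R, x)" using z by simp
    obtain j where j: "completely_join_irreducible (tag ` DP U R) (\<subseteq>) j" "j \<subseteq> tag (x \<inter> singR U R, x)"
      "(z, False) \<in> j" using F'[OF T zT] by blast
    obtain E' B' q b where jEB: "j = tag (E', B')" "(E', B') \<in> DP U R" and qb: "(q, b) \<in> j"
      and mn: "\<And>k. k \<in> tag ` DP U R \<Longrightarrow> (q, b) \<in> k \<Longrightarrow> k \<subseteq> j \<Longrightarrow> k = j"
      using cjiF_elim[OF j(1)] by blast
    have sub': "E' \<subseteq> x \<inter> singR U R" "B' \<subseteq> x" using j(2) unfolding jEB by simp_all
    have B'R: "B' \<in> uppR_sets U R" using jEB(2) by (simp add: DP_def)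
    have eqS: "E' \<inter> singR U R = B' \<inter> singR U R" using jEB(2) by (simp add: DP_def)
    have qB: "q \<in> B'"
    proof (cases b)
      case True
      hence "q \<in> E'" using qb jEB(1) by simp
      thus ?thesis using sub' eqS by blast
    next
      case False
      thus ?thesis using qb jEB(1) by simp
    qed
    have qS: "b \<Longrightarrow> q \<in> singR U R" using qb jEB(1) sub' by auto
    have "completely_join_irreducible (uppR_sets U R) (\<subseteq>) B'"
    proof (rule cjiR_intro[OF B'R qB])
      fix K assume K: "K \<in> uppR_sets U R" "q \<in> K" "K \<subseteq> B'"
      have "tag (K \<inter> singR U R, K) \<in> tag ` DP U R" using DP_K[OF K(1)] by (rule imageI)
      moreover have "(q, b) \<in> tag (K \<inter> singR U R, K)" using K qS by (cases b) auto
      moreover have "tag (K \<inter> singR U R, K) \<subseteq> j" using K eqS unfolding jEB(1) by auto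
      ultimately have "tag (K \<inter> singR U R, K) = j" by (rule mn)
      thus "K = B'" unfolding jEB(1) by simp
    qed
    moreover have "z \<in> B'" using j(3) unfolding jEB(1) by simp
    ultimately show "\<exists>j. completely_join_irreducible (uppR_sets U R) (\<subseteq>) j \<and> j \<subseteq> x \<and> z \<in> j"
      using sub'(2) by blast
  qed
  moreover have "\<forall>x\<in>uppC_sets U R. \<forall>p\<in>x. \<exists>j. completely_join_irreducible (uppC_sets U R) (\<subseteq>) j \<and> j \<subseteq> x \<and> p \<in> j"
  proof (intro ballI)
    fix x z assume x: "x \<in> uppC_sets U R" and z: "z \<in> x"
    show "\<exists>j. completely_join_irreducible (uppC_sets U R) (\<subseteq>) j \<and> j \<subseteq> x \<and> z \<in> j"
    proof (cases "z \<in> singR U R")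
      case True
      have zC: "{z} \<in> uppC_sets U R" using True by (intro S_in_uppC) simp
      have "completely_join_irreducible (uppC_sets U R) (\<subseteq>) {z}"
      proof (rule cjiC_intro[OF zC, of z])
        show "z \<in> {z}" by simp
        fix k assume "k \<in> uppC_sets U R" "z \<in> k" "k \<subseteq> {z}"
        thus "k = {z}" by blast
      qed
      thus ?thesis using z by blast
    next
      case False
      have T: "tag (x, uppR U R x) \<in> tag ` DP U R" using DP_E[OF x] by (rule imageI)
      have zT: "(z, True) \<in> tag (x, uppR U R x)" using z by simp
      obtain j where j: "completely_join_irreducible (tag ` DP U R) (\<subseteq>) j" "j \<subseteq> tag (x, uppR U R x)"
        "(z, True) \<in> j" using F'[OF T zT] by blast
      obtain E' B' q b where jEB: "j = tag (E', B')" "(E', B') \<in> DP U R" and qb: "(q, b) \<in> j"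
        and mn: "\<And>k. k \<in> tag ` DP U R \<Longrightarrow> (q, b) \<in> k \<Longrightarrow> k \<subseteq> j \<Longrightarrow> k = j"
        using cjiF_elim[OF j(1)] by blast
      have sub': "E' \<subseteq> x" "B' \<subseteq> uppR U R x" using j(2) unfolding jEB(1) by simp_all
      have E'C: "E' \<in> uppC_sets U R" and B'R: "B' \<in> uppR_sets U R" and uE: "uppR U R E' \<subseteq> B'"
        and eqS: "E' \<inter> singR U R = B' \<inter> singR U R"
        using jEB(2) by (simp_all add: DP_def)
      have zE: "z \<in> E'" using j(3) unfolding jEB(1) by simp
      show ?thesis
      proof (cases b)
        case True
        have qE: "q \<in> E'" using qb True unfolding jEB(1) by simp
        have "completely_join_irreducible (uppC_sets U R) (\<subseteq>) E'"
        proof (rule cjiC_intro[OF E'C qE])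
          fix K assume K: "K \<in> uppC_sets U R" "q \<in> K" "K \<subseteq> E'"
          have "tag (K, uppR U R K) \<in> tag ` DP U R" using DP_E[OF K(1)] by (rule imageI)
          moreover have "(q, b) \<in> tag (K, uppR U R K)" using K True by simp
          moreover have "tag (K, uppR U R K) \<subseteq> j"
          proof -
            have "uppR U R K \<subseteq> uppR U R E'" by (rule uppR_mono) (use K in simp)
            thus ?thesis using K uE unfolding jEB(1) by auto
          qed
          ultimately have "tag (K, uppR U R K) = j" by (rule mn)
          thus "K = E'" unfolding jEB(1) by simp
        qed
        thus ?thesis using zE sub'(1) by blast
      next
        case b: False
        have qB: "q \<in> B'" using qb b unfolding jEB(1) by simp
        have "tag (B' \<inter> singR U R, B') \<in> tag ` DP U R" using DP_K[OF B'R] by (rule imageI)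
        moreover have "(q, b) \<in> tag (B' \<inter> singR U R, B')" using qB b by simp
        moreover have "tag (B' \<inter> singR U R, B') \<subseteq> j" using eqS unfolding jEB(1) by auto
        ultimately have "tag (B' \<inter> singR U R, B') = j" by (rule mn)
        hence "E' = B' \<inter> singR U R" unfolding jEB(1) by simp
        thus ?thesis using zE False by blast
      qed
    qed
  qed
  ultimately show "spatial (uppR_sets U R) (\<subseteq>) \<and> spatial (uppC_sets U R) (\<subseteq>)"
    unfolding spR spC by blast
next
  assume a: "spatial (uppR_sets U R) (\<subseteq>) \<and> spatial (uppC_sets U R) (\<subseteq>)"
  have R': "\<And>x p. x \<in> uppR_sets U R \<Longrightarrow> p \<in> x \<Longrightarrow> \<exists>j. completely_join_irreducible (uppR_sets U R) (\<subseteq>) j \<and> j \<subseteq> x \<and> p \<in> j"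
    using a unfolding spR by blast
  have C': "\<And>x p. x \<in> uppC_sets U R \<Longrightarrow> p \<in> x \<Longrightarrow> \<exists>j. completely_join_irreducible (uppC_sets U R) (\<subseteq>) j \<and> j \<subseteq> x \<and> p \<in> j"
    using a unfolding spC by blast
  have "\<forall>x\<in>tag ` DP U R. \<forall>p\<in>x. \<exists>j. completely_join_irreducible (tag ` DP U R) (\<subseteq>) j \<and> j \<subseteq> x \<and> p \<in> j"
  proof (intro ballI)
    fix T p assume T: "T \<in> tag ` DP U R" and p: "p \<in> T"
    obtain EB where EB0: "EB \<in> DP U R" "T = tag EB" using T by blast
    obtain E B where EBp: "EB = (E, B)" by (cases EB) simp
    have EBD: "(E, B) \<in> DP U R" and TEB: "T = tag (E, B)" using EB0 EBp by simp_all
    have EC: "E \<in> uppC_sets U R" and BR: "B \<in> uppR_sets U R" and uE: "uppR U R E \<subseteq> B"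
      and eqS: "E \<inter> singR U R = B \<inter> singR U R" using EBD by (simp_all add: DP_def)
    obtain z b where zb: "p = (z, b)" by (cases p) simp
    show "\<exists>j. completely_join_irreducible (tag ` DP U R) (\<subseteq>) j \<and> j \<subseteq> T \<and> p \<in> j"
    proof (cases b)
      case True
      have zE: "z \<in> E" using p True unfolding zb TEB by simp
      obtain K where K: "completely_join_irreducible (uppC_sets U R) (\<subseteq>) K" "K \<subseteq> E" "z \<in> K"
        using C'[OF EC zE] by blast
      obtain q where KC: "K \<in> uppC_sets U R" and q: "q \<in> K"
        and qm: "\<And>k. k \<in> uppC_sets U R \<Longrightarrow> q \<in> k \<Longrightarrow> k \<subseteq> K \<Longrightarrow> k = K"
        using cjiC_elim[OF K(1)] by blast
      have jF: "tag (K, uppR U R K) \<in> tag ` DP U R" using DP_E[OF KC] by (rule imageI)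
      have "completely_join_irreducible (tag ` DP U R) (\<subseteq>) (tag (K, uppR U R K))"
      proof (rule cjiF_intro[OF jF, of "(q, True)"])
        show "(q, True) \<in> tag (K, uppR U R K)" using q by simp
        fix k assume k: "k \<in> tag ` DP U R" "(q, True) \<in> k" "k \<subseteq> tag (K, uppR U R K)"
        obtain EB' where EB': "EB' \<in> DP U R" "k = tag EB'" using k(1) by blast
        obtain E' B' where EBp': "EB' = (E', B')" by (cases EB') simp
        have kEB: "k = tag (E', B')" "(E', B') \<in> DP U R" using EB' EBp' by simp_all
        have E'C: "E' \<in> uppC_sets U R" and uE': "uppR U R E' \<subseteq> B'" using kEB(2) by (simp_all add: DP_def)
        have qE': "q \<in> E'" using k(2) unfolding kEB(1) by simp
        have s1: "E' \<subseteq> K" and s2: "B' \<subseteq> uppR U R K" using k(3) unfolding kEB(1) by simp_all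
        have "E' = K" by (rule qm[OF E'C qE' s1])
        thus "k = tag (K, uppR U R K)" using uE' s2 unfolding kEB(1) by auto
      qed
      moreover have "tag (K, uppR U R K) \<subseteq> T"
      proof -
        have "uppR U R K \<subseteq> uppR U R E" by (rule uppR_mono) (use K in simp)
        thus ?thesis using K(2) uE unfolding TEB by auto
      qed
      moreover have "p \<in> tag (K, uppR U R K)" using True K(3) unfolding zb by simp
      ultimately show ?thesis by blast
    next
      case False
      have zB: "z \<in> B" using p False unfolding zb TEB by simp
      obtain K where K: "completely_join_irreducible (uppR_sets U R) (\<subseteq>) K" "K \<subseteq> B" "z \<in> K"
        using R'[OF BR zB] by blast
      obtain q where KR: "K \<in> uppR_sets U R" and q: "q \<in> K"
        and qm: "\<And>k. k \<in> uppR_sets U R \<Longrightarrow> q \<in> k \<Longrightarrow> k \<subseteq> K \<Longrightarrow> k = K"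
        using cjiR_elim[OF K(1)] by blast
      have jF: "tag (K \<inter> singR U R, K) \<in> tag ` DP U R" using DP_K[OF KR] by (rule imageI)
      have "completely_join_irreducible (tag ` DP U R) (\<subseteq>) (tag (K \<inter> singR U R, K))"
      proof (rule cjiF_intro[OF jF, of "(q, False)"])
        show "(q, False) \<in> tag (K \<inter> singR U R, K)" using q by simp
        fix k assume k: "k \<in> tag ` DP U R" "(q, False) \<in> k" "k \<subseteq> tag (K \<inter> singR U R, K)"
        obtain EB' where EB': "EB' \<in> DP U R" "k = tag EB'" using k(1) by blast
        obtain E' B' where EBp': "EB' = (E', B')" by (cases EB') simp
        have kEB: "k = tag (E', B')" "(E', B') \<in> DP U R" using EB' EBp' by simp_all
        have B'R: "B' \<in> uppR_sets U R" and eq': "E' \<inter> singR U R = B' \<inter> singR U R"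
          using kEB(2) by (simp_all add: DP_def)
        have qB': "q \<in> B'" using k(2) unfolding kEB(1) by simp
        have s1: "E' \<subseteq> K \<inter> singR U R" and s2: "B' \<subseteq> K" using k(3) unfolding kEB(1) by simp_all
        have BK: "B' = K" by (rule qm[OF B'R qB' s2])
        hence "E' = K \<inter> singR U R" using eq' s1 by blast
        thus "k = tag (K \<inter> singR U R, K)" using BK unfolding kEB(1) by simp
      qed
      moreover have "tag (K \<inter> singR U R, K) \<subseteq> T" using K(2) eqS unfolding TEB by auto
      moreover have "p \<in> tag (K \<inter> singR U R, K)" using False K(3) unfolding zb by simp
      ultimately show ?thesis by blast
    qed
  qed
  thus "spatial (tag ` DP U R) (\<subseteq>)" unfolding spF .
qed

end

theorem mainTheorem5:
  fixes U :: "'a set" and R :: "('a \<times> 'a) set"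
  assumes "R \<subseteq> U \<times> U"
    and "\<forall>x\<in>U. (x, x) \<in> R"
  shows "spatial (DMRS U R) pair_le \<longleftrightarrow>
         (spatial (uppR_sets U R) (\<subseteq>) \<and> spatial (uppC_sets U R) (\<subseteq>))"
proof -
  interpret rsr U R using assms by unfold_locales
  show ?thesis using spatial_DMRS main_eq by simp
qed

end
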